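(* In the algebra $(\mathbb Z,+,\mathbb Z)$, for all $a,b,c,d,e,f,g,h\in\mathbb Z$: if $a:b::_m c:d$ and $e:f::_m g:h$, then $a+e:b+f::_m c+g:d+h$.
   Context: $(\mathbb Z,+,\mathbb Z)$ is the algebra with universe $\mathbb Z$, addition, and every integer as a constant. A justification is a pair of terms $s\to t$ with the variables of $t$ among those of $s$; monolinear justifications are those where $s,t$ contain only one fixed variable $x$, occurring at most once in $s$ and at most once in $t$. $\uparrow^m(a\to b)$ is the set of monolinear justifications $s\to t$ with $a=s(\mathbf o)$, $b=t(\mathbf o)$ for some value $\mathbf o$; $\uparrow^m(a\to b:\!\cdot\,c\to d):=\uparrow^m(a\to b)\cap\uparrow^m(c\to d)$. A monolinear justification is trivial if it lies in all sets $\uparrow^m(a'\to b':\!\cdot\,c'\to d')$. $a\to b:\!\cdot_m\,c\to d$ holds iff either (i) all justifications in $\uparrow^m(a\to b)\cup\uparrow^m(c\to d)$ are trivial, or (ii) $J_d:=\uparrow^m(a\to b:\!\cdot\,c\to d)$ contains a non-trivial justification and for every $d'$, $J_d\subseteq J_{d'}$ implies $J_{d'}$ contains a non-trivial justification and $J_{d'}\subseteq J_d$ (ignoring trivial justifications). $a:b::_m c:d$ iff $a\to b:\!\cdot_m\,c\to d$, $b\to a:\!\cdot_m\,d\to c$, $c\to d:\!\cdot_m\,a\to b$, $d\to c:\!\cdot_m\,b\to a$ all hold. *)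

theory Defs
  imports Main
begin

text \<open>Terms of the algebra (Z, +, Z): variables, integer constants (every integer is a
constant symbol), and binary addition.\<close>
datatype trm = Var nat | Cst int | Add trm trm

fun tvars :: "trm \<Rightarrow> nat set" where
  "tvars (Var n) = {n}"
| "tvars (Cst k) = {}"
| "tvars (Add s t) = tvars s \<union> tvars t"

fun occ :: "nat \<Rightarrow> trm \<Rightarrow> nat" where
  "occ n (Var m) = (if m = n then 1 else 0)"
| "occ n (Cst k) = 0"
| "occ n (Add s t) = occ n s + occ n t"

fun teval :: "(nat \<Rightarrow> int) \<Rightarrow> trm \<Rightarrow> int" where
  "teval \<sigma> (Var n) = \<sigma> n"
| "teval \<sigma> (Cst k) = k"
| "teval \<sigma> (Add s t) = teval \<sigma> s + teval \<sigma> t"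

definition xvar :: nat where "xvar = 0"

definition justification :: "trm \<times> trm \<Rightarrow> bool" where
  "justification j \<longleftrightarrow> tvars (snd j) \<subseteq> tvars (fst j)"

definition monolinear :: "trm \<times> trm \<Rightarrow> bool" where
  "monolinear j \<longleftrightarrow> justification j
     \<and> tvars (fst j) \<subseteq> {xvar} \<and> tvars (snd j) \<subseteq> {xvar}
     \<and> occ xvar (fst j) \<le> 1 \<and> occ xvar (snd j) \<le> 1"

definition ev1 :: "trm \<Rightarrow> int \<Rightarrow> int" where
  "ev1 s v = teval (\<lambda>_. v) s"

definition up :: "int \<Rightarrow> int \<Rightarrow> (trm \<times> trm) set" where
  "up a b = {j. monolinear j \<and> (\<exists>v. ev1 (fst j) v = a \<and> ev1 (snd j) v = b)}"

definition up2 :: "int \<Rightarrow> int \<Rightarrow> int \<Rightarrow> int \<Rightarrow> (trm \<times> trm) set" where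
  "up2 a b c d = up a b \<inter> up c d"

definition trivial :: "trm \<times> trm \<Rightarrow> bool" where
  "trivial j \<longleftrightarrow> monolinear j \<and> (\<forall>a' b' c' d'. j \<in> up2 a' b' c' d')"

definition ntJ :: "int \<Rightarrow> int \<Rightarrow> int \<Rightarrow> int \<Rightarrow> (trm \<times> trm) set" where
  "ntJ a b c d = {j \<in> up2 a b c d. \<not> trivial j}"

definition arrow_prop :: "int \<Rightarrow> int \<Rightarrow> int \<Rightarrow> int \<Rightarrow> bool" where
  "arrow_prop a b c d \<longleftrightarrow>
     (\<forall>j \<in> up a b \<union> up c d. trivial j)
   \<or> (ntJ a b c d \<noteq> {} \<and>
      (\<forall>d'. ntJ a b c d \<subseteq> ntJ a b c d' \<longrightarrow>
             ntJ a b c d' \<noteq> {} \<and> ntJ a b c d' \<subseteq> ntJ a b c d))"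

definition prop_m :: "int \<Rightarrow> int \<Rightarrow> int \<Rightarrow> int \<Rightarrow> bool" where
  "prop_m a b c d \<longleftrightarrow> arrow_prop a b c d \<and> arrow_prop b a d c
     \<and> arrow_prop c d a b \<and> arrow_prop d c b a"

end

theory Submission
  imports Defs
begin

lemma ev_lin: "tvars s \<subseteq> {0} \<Longrightarrow> teval (\<lambda>_. v) s = int (occ 0 s) * v + teval (\<lambda>_. 0) s"
  by (induction s) (auto simp: algebra_simps split: if_splits)

lemma occ0: "occ n s = 0 \<longleftrightarrow> n \<notin> tvars s"
  by (induction s) auto

lemma key:
  assumes "j \<in> up a b" "j \<in> up c d"
  shows "b = d \<or> b - a = d - c"
proof -
  obtain s t where j: "j = (s, t)" by (cases j)
  have m: "monolinear j" using assms by (simp add: up_def)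
  hence ts: "tvars s \<subseteq> {0}" "tvars t \<subseteq> {0}" "occ 0 s \<le> 1" "occ 0 t \<le> 1"
     "tvars t \<subseteq> tvars s"
    by (auto simp: monolinear_def justification_def xvar_def j)
  obtain v where v: "ev1 s v = a" "ev1 t v = b" using assms(1) by (auto simp: up_def j)
  obtain w where w: "ev1 s w = c" "ev1 t w = d" using assms(2) by (auto simp: up_def j)
  have es: "\<And>u. ev1 s u = int (occ 0 s) * u + teval (\<lambda>_. 0) s"
    "\<And>u. ev1 t u = int (occ 0 t) * u + teval (\<lambda>_. 0) t"
    unfolding ev1_def by (rule ev_lin[OF ts(1)], rule ev_lin[OF ts(2)])
  show ?thesis
  proof (cases "occ 0 t = 0")
    case True then show ?thesis using v w es by simp
  next
    case False
    then have "occ 0 t = 1" using ts by simp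
    moreover have "occ 0 s \<noteq> 0" using False ts(5) by (auto simp: occ0)
    then have "occ 0 s = 1" using ts by simp
    ultimately show ?thesis using v w es by auto
  qed
qed

lemma not_trivial: "\<not> trivial j"
proof
  assume "trivial j"
  then have "j \<in> up 0 0" "j \<in> up 0 1" by (auto simp: trivial_def up2_def)
  then show False using key by fastforce
qed

lemma arrow_iff: "arrow_prop a b c d \<longleftrightarrow> (b = d \<or> b - a = d - c)"
proof
  assume A: "arrow_prop a b c d"
  have "(Cst a, Cst b) \<in> up a b"
    by (simp add: up_def monolinear_def justification_def ev1_def)
  then have "ntJ a b c d \<noteq> {}" using A not_trivial by (auto simp: arrow_prop_def)
  then obtain j where "j \<in> up a b" "j \<in> up c d" by (auto simp: ntJ_def up2_def)
  then show "b = d \<or> b - a = d - c" using key by blast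
next
  assume H: "b = d \<or> b - a = d - c"
  have ml: "monolinear (s, t)" if "tvars s = {0}" "tvars t \<subseteq> {0}" "occ 0 s \<le> 1" "occ 0 t \<le> 1"
    for s t using that by (auto simp: monolinear_def justification_def xvar_def)
  define j where "j = (if b = d then (Var 0, Cst b) else (Add (Var 0) (Cst 0), Add (Var 0) (Cst (b - a))))"
  have jm: "monolinear j" unfolding j_def by (auto intro!: ml)
  have jab: "j \<in> up a b" using jm H unfolding up_def j_def ev1_def by auto
  have jcd: "j \<in> up c d" using jm H unfolding up_def j_def ev1_def
    by (cases "b = d") (auto intro!: exI[of _ c])
  have nt: "ntJ a b c d' = up a b \<inter> up c d'" for d'
    using not_trivial by (auto simp: ntJ_def up2_def)
  have "d' = d" if "j \<in> up c d'" for d'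
    using key[OF jcd that] key[OF jab that] H by auto
  then show "arrow_prop a b c d"
    unfolding arrow_prop_def nt using jab jcd by blast
qed

lemma prop_iff: "prop_m a b c d \<longleftrightarrow> a - b = c - d"
  unfolding prop_m_def arrow_iff by auto

theorem mainTheorem6:
  fixes a b c d e f g h :: int
  assumes "prop_m a b c d" and "prop_m e f g h"
  shows "prop_m (a + e) (b + f) (c + g) (d + h)"
  using assms unfolding prop_iff by simp

end
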